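(* Let $S=\{(d/p)_G : G \text{ a finite digraph with at least one vertex}\}$. Then $S$ is dense in the interval $[0,1/2]$; that is, for every $r\in[0,1/2]$ and every $\varepsilon>0$ there is a finite digraph $G$ with $|(d/p)_G - r|<\varepsilon$.
   Context: Digraphs are finite, with no loops. A permutation in a digraph $G=(V,E)$ is a bijection $f:V\to V$ such that for every $v\in V$ either $f(v)=v$ or $(v,f(v))\in E$. A derangement in $G$ is a permutation of $G$ that fixes no vertex. $(d/p)_G$ denotes the number of derangements of $G$ divided by the number of permutations of $G$ (the identity is always a permutation, so this is well defined). *)

theory Defs
  imports Complex_Main
begin

definition digraph :: "'a set \<Rightarrow> ('a \<times> 'a) set \<Rightarrow> bool" where
  "digraph V E \<longleftrightarrow> finite V \<and> E \<subseteq> V \<times> V \<and> (\<forall>v. (v, v) \<notin> E)"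

definition graph_perms :: "'a set \<Rightarrow> ('a \<times> 'a) set \<Rightarrow> ('a \<Rightarrow> 'a) set" where
  "graph_perms V E = {f. bij_betw f V V \<and> (\<forall>v\<in>V. f v = v \<or> (v, f v) \<in> E)
                         \<and> (\<forall>v. v \<notin> V \<longrightarrow> f v = v)}"

definition graph_derangements :: "'a set \<Rightarrow> ('a \<times> 'a) set \<Rightarrow> ('a \<Rightarrow> 'a) set" where
  "graph_derangements V E = {f \<in> graph_perms V E. \<forall>v\<in>V. f v \<noteq> v}"

definition dp_ratio :: "'a set \<Rightarrow> ('a \<times> 'a) set \<Rightarrow> real" where
  "dp_ratio V E = real (card (graph_derangements V E)) / real (card (graph_perms V E))"

end

theory Submission
  imports Defs "HOL-Combinatorics.Permutations" "HOL-Library.FuncSet"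
begin


lemma graph_perms_alt:
  "graph_perms V E = {f. f permutes V \<and> (\<forall>v\<in>V. f v = v \<or> (v, f v) \<in> E)}"
  unfolding graph_perms_def
  by (auto intro: bij_imp_permutes dest: permutes_imp_bij simp: permutes_not_in)

lemma graph_der_alt:
  "graph_derangements V E = {f \<in> graph_perms V E. \<forall>v\<in>V. f v \<noteq> v}"
  by (simp add: graph_derangements_def)

definition splitE :: "('a\<times>'a) set \<Rightarrow> 'a \<Rightarrow> 'a \<Rightarrow> ('a\<times>'a) set" where
  "splitE E v w = {e \<in> E. fst e \<noteq> v} \<union> {(w, y) | y. (v, y) \<in> E} \<union> {(v,w),(w,v)}"

definition delE :: "('a\<times>'a) set \<Rightarrow> 'a \<Rightarrow> ('a\<times>'a) set" where
  "delE E v = {e \<in> E. fst e \<noteq> v \<and> snd e \<noteq> v}"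

lemma finite_graph_perms:
  assumes "finite V" shows "finite (graph_perms V E)"
proof -
  have "graph_perms V E \<subseteq> {p. p permutes V}" by (auto simp: graph_perms_alt)
  moreover have "finite {p. p permutes V}" using assms by (rule finite_permutations)
  ultimately show ?thesis by (rule finite_subset)
qed

lemma permutes_restrict_fix:
  assumes "p permutes insert w V" "p w = w"
  shows "p permutes V"
  by (rule permutes_superset[OF assms(1)]) (use assms in auto)

context
  fixes V E v w
  assumes dg: "digraph V E" and vV: "v \<in> V" and wV: "w \<notin> V"
begin

private abbreviation "V' \<equiv> insert w V"
private abbreviation "E' \<equiv> splitE E v w"
private abbreviation "\<tau> \<equiv> Transposition.transpose v w"

private lemma EVs: "E \<subseteq> V \<times> V"
  using dg by (auto simp: digraph_def)

private lemma vw: "v \<noteq> w" using vV wV by auto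

private lemma E'_from_v: "(v, y) \<in> E' \<longleftrightarrow> y = w"
  using vw by (auto simp: splitE_def)

private lemma P'_v: "f \<in> graph_perms V' E' \<Longrightarrow> f v = v \<or> f v = w"
  using E'_from_v vV by (auto simp: graph_perms_alt)

private lemma C_eq:
  "{f \<in> graph_perms V' E'. f v = v} = {f \<in> graph_perms V E. f v = v}"
proof (intro set_eqI iffI)
  fix f assume "f \<in> {f \<in> graph_perms V' E'. f v = v}"
  hence fp: "f permutes V'" and fe: "\<forall>x\<in>V'. f x = x \<or> (x, f x) \<in> E'" and fv: "f v = v"
    by (auto simp: graph_perms_alt)
  have fw: "f w = w"
  proof (rule ccontr)
    assume ne: "f w \<noteq> w"
    have "w \<in> f ` V'" using permutes_image[OF fp] by simp
    then obtain x where x: "x \<in> V'" "f x = w" by blast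
    have "x \<noteq> w" using x ne by auto
    moreover have "x \<noteq> v" using x fv vw by auto
    ultimately have "(x, w) \<in> E'" using fe x by auto
    thus False using \<open>x \<noteq> v\<close> \<open>x \<noteq> w\<close> EVs wV by (auto simp: splitE_def)
  qed
  have "f permutes V" using permutes_restrict_fix[OF fp fw] .
  moreover have "\<forall>x\<in>V. f x = x \<or> (x, f x) \<in> E"
  proof
    fix x assume "x \<in> V"
    show "f x = x \<or> (x, f x) \<in> E"
    proof (cases "x = v")
      case True thus ?thesis using fv by simp
    next
      case False
      hence "x \<noteq> w" using \<open>x \<in> V\<close> wV by auto
      thus ?thesis using fe \<open>x \<in> V\<close> False by (auto simp: splitE_def)
    qed
  qed
  ultimately show "f \<in> {f \<in> graph_perms V E. f v = v}" using fv by (simp add: graph_perms_alt)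
next
  fix f assume "f \<in> {f \<in> graph_perms V E. f v = v}"
  hence fp: "f permutes V" and fe: "\<forall>x\<in>V. f x = x \<or> (x, f x) \<in> E" and fv: "f v = v"
    by (auto simp: graph_perms_alt)
  have "f permutes V'" using fp by (rule permutes_subset) auto
  moreover have "\<forall>x\<in>V'. f x = x \<or> (x, f x) \<in> E'"
  proof
    fix x assume x: "x \<in> V'"
    show "f x = x \<or> (x, f x) \<in> E'"
    proof (cases "x = w")
      case True thus ?thesis using permutes_not_in[OF fp wV] by simp
    next
      case False
      hence "x \<in> V" using x by auto
      thus ?thesis using fe fv by (cases "x = v") (auto simp: splitE_def)
    qed
  qed
  ultimately show "f \<in> {f \<in> graph_perms V' E'. f v = v}" using fv by (simp add: graph_perms_alt)
qed


private lemma B_fwd: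
  assumes "f \<in> graph_perms V E" "f v \<noteq> v"
  shows "f \<circ> \<tau> \<in> graph_perms V' E'" "(f \<circ> \<tau>) v = w" "(f \<circ> \<tau>) w \<noteq> v"
proof -
  have fp: "f permutes V" and fe: "\<forall>x\<in>V. f x = x \<or> (x, f x) \<in> E"
    using assms(1) by (auto simp: graph_perms_alt)
  have fw: "f w = w" using permutes_not_in[OF fp wV] .
  have fvV: "f v \<in> V" using permutes_in_image[OF fp] vV by simp
  have "(v, f v) \<in> E" using fe vV assms(2) by auto
  have "f permutes V'" using fp by (rule permutes_subset) auto
  moreover have "\<tau> permutes V'" using vV by (intro permutes_swap_id) auto
  ultimately have "f \<circ> \<tau> permutes V'" by (rule permutes_compose[rotated])
  moreover have "\<forall>x\<in>V'. (f \<circ> \<tau>) x = x \<or> (x, (f \<circ> \<tau>) x) \<in> E'"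
  proof
    fix x assume x: "x \<in> V'"
    show "(f \<circ> \<tau>) x = x \<or> (x, (f \<circ> \<tau>) x) \<in> E'"
    proof (cases "x = v")
      case True thus ?thesis using fw by (simp add: splitE_def)
    next
      case xv: False
      show ?thesis
      proof (cases "x = w")
        case True thus ?thesis using \<open>(v, f v) \<in> E\<close> by (auto simp: splitE_def)
      next
        case False
        hence "x \<in> V" using x by auto
        thus ?thesis using fe xv False by (auto simp: splitE_def)
      qed
    qed
  qed
  ultimately show "f \<circ> \<tau> \<in> graph_perms V' E'" by (simp add: graph_perms_alt)
  show "(f \<circ> \<tau>) v = w" using fw by simp
  show "(f \<circ> \<tau>) w \<noteq> v" using assms(2) by simp
qed

private lemma B_bwd:
  assumes "f \<in> graph_perms V' E'" "f v = w" "f w \<noteq> v"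
  shows "f \<circ> \<tau> \<in> graph_perms V E" "(f \<circ> \<tau>) v \<noteq> v"
proof -
  have fp: "f permutes V'" and fe: "\<forall>x\<in>V'. f x = x \<or> (x, f x) \<in> E'"
    using assms(1) by (auto simp: graph_perms_alt)
  have fww: "f w \<noteq> w"
  proof
    assume "f w = w"
    hence "f w = f v" using assms(2) by simp
    hence "w = v" using permutes_inj[OF fp] by (simp add: inj_eq)
    thus False using vw by simp
  qed
  have tp: "\<tau> permutes V'" using vV by (intro permutes_swap_id) auto
  have gp: "f \<circ> \<tau> permutes V'" using tp fp by (rule permutes_compose)
  have gw: "(f \<circ> \<tau>) w = w" using assms(2) by simp
  have g1: "f \<circ> \<tau> permutes V" using permutes_restrict_fix[OF gp gw] .
  have "(w, f w) \<in> E'" using fe fww by auto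
  hence vfw: "(v, f w) \<in> E" using fww assms(3) vw EVs wV unfolding splitE_def by blast
  have g2: "\<forall>x\<in>V. (f \<circ> \<tau>) x = x \<or> (x, (f \<circ> \<tau>) x) \<in> E"
  proof
    fix x assume x: "x \<in> V"
    show "(f \<circ> \<tau>) x = x \<or> (x, (f \<circ> \<tau>) x) \<in> E"
    proof (cases "x = v")
      case True thus ?thesis using vfw by simp
    next
      case False
      have xw: "x \<noteq> w" using x wV by auto
      hence "f x = x \<or> (x, f x) \<in> E'" using fe x by auto
      moreover have "(f \<circ> \<tau>) x = f x" using False xw by simp
      ultimately show ?thesis using False xw unfolding splitE_def by auto
    qed
  qed
  show "f \<circ> \<tau> \<in> graph_perms V E" using g1 g2 by (simp add: graph_perms_alt)
  show "(f \<circ> \<tau>) v \<noteq> v" using assms(3) by simp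
qed

private lemma A_fwd:
  assumes "h \<in> graph_perms (V - {v}) (delE E v)"
  shows "\<tau> \<circ> h \<in> graph_perms V' E'" "(\<tau> \<circ> h) v = w" "(\<tau> \<circ> h) w = v"
proof -
  have hp: "h permutes V - {v}" and he: "\<forall>x\<in>V-{v}. h x = x \<or> (x, h x) \<in> delE E v"
    using assms(1) by (auto simp: graph_perms_alt)
  have hv: "h v = v" using permutes_not_in[OF hp] by simp
  have hw: "h w = w" using permutes_not_in[OF hp] wV by simp
  have "h permutes V'" using hp by (rule permutes_subset) auto
  moreover have "\<tau> permutes V'" using vV by (intro permutes_swap_id) auto
  ultimately have "\<tau> \<circ> h permutes V'" by (rule permutes_compose)
  moreover have "\<forall>x\<in>V'. (\<tau> \<circ> h) x = x \<or> (x, (\<tau> \<circ> h) x) \<in> E'"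
  proof
    fix x assume x: "x \<in> V'"
    show "(\<tau> \<circ> h) x = x \<or> (x, (\<tau> \<circ> h) x) \<in> E'"
    proof (cases "x = v \<or> x = w")
      case True thus ?thesis using hv hw by (auto simp: splitE_def)
    next
      case False
      hence xV: "x \<in> V - {v}" using x by auto
      hence hx: "h x \<in> V - {v}" using permutes_in_image[OF hp] by simp
      hence "h x \<noteq> v" "h x \<noteq> w" using wV by auto
      hence "\<tau> (h x) = h x" by simp
      moreover have "h x = x \<or> (x, h x) \<in> delE E v" using he xV by auto
      ultimately show ?thesis using False by (auto simp: splitE_def delE_def)
    qed
  qed
  ultimately show "\<tau> \<circ> h \<in> graph_perms V' E'" by (simp add: graph_perms_alt)
  show "(\<tau> \<circ> h) v = w" "(\<tau> \<circ> h) w = v" using hv hw by simp_all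
qed

private lemma A_bwd:
  assumes "f \<in> graph_perms V' E'" "f v = w" "f w = v"
  shows "\<tau> \<circ> f \<in> graph_perms (V - {v}) (delE E v)"
proof -
  have fp: "f permutes V'" and fe: "\<forall>x\<in>V'. f x = x \<or> (x, f x) \<in> E'"
    using assms(1) by (auto simp: graph_perms_alt)
  have "\<tau> permutes V'" using vV by (intro permutes_swap_id) auto
  hence gp: "\<tau> \<circ> f permutes V'" using fp by (rule permutes_compose[rotated])
  have other: "f x \<noteq> v \<and> f x \<noteq> w" if "x \<noteq> v" "x \<noteq> w" for x
    using that assms(2,3) by (metis permutes_inj[OF fp] injD)
  have "\<tau> \<circ> f permutes V - {v}"
    by (rule permutes_superset[OF gp]) (use assms(2,3) in auto)
  moreover have "\<forall>x\<in>V-{v}. (\<tau> \<circ> f) x = x \<or> (x, (\<tau> \<circ> f) x) \<in> delE E v"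
  proof
    fix x assume x: "x \<in> V - {v}"
    hence xw: "x \<noteq> w" using wV by auto
    have o: "f x \<noteq> v" "f x \<noteq> w" using other[of x] x xw by auto
    hence "\<tau> (f x) = f x" by simp
    moreover have "f x = x \<or> (x, f x) \<in> E'" using fe x by auto
    ultimately show "(\<tau> \<circ> f) x = x \<or> (x, (\<tau> \<circ> f) x) \<in> delE E v"
      using x xw o by (auto simp: splitE_def delE_def)
  qed
  ultimately show ?thesis by (simp add: graph_perms_alt)
qed


private lemma fin': "finite V'" using dg by (simp add: digraph_def)

private lemma tt: "g \<circ> \<tau> \<circ> \<tau> = g" "\<tau> \<circ> (\<tau> \<circ> g) = g"
  by (rule ext, simp)+

private lemma Bimg:
  "{f \<in> graph_perms V' E'. f v = w \<and> f w \<noteq> v} = (\<lambda>f. f \<circ> \<tau>) ` {f \<in> graph_perms V E. f v \<noteq> v}"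
proof (intro set_eqI iffI)
  fix f assume "f \<in> {f \<in> graph_perms V' E'. f v = w \<and> f w \<noteq> v}"
  hence a: "f \<in> graph_perms V' E'" "f v = w" "f w \<noteq> v" by auto
  have "f = (f \<circ> \<tau>) \<circ> \<tau>" using tt(1)[of f] by simp
  moreover have "f \<circ> \<tau> \<in> {f \<in> graph_perms V E. f v \<noteq> v}" using B_bwd[OF a] by simp
  ultimately show "f \<in> (\<lambda>f. f \<circ> \<tau>) ` {f \<in> graph_perms V E. f v \<noteq> v}" by blast
next
  fix f assume "f \<in> (\<lambda>f. f \<circ> \<tau>) ` {f \<in> graph_perms V E. f v \<noteq> v}"
  then obtain g where "g \<in> graph_perms V E" "g v \<noteq> v" "f = g \<circ> \<tau>" by auto
  thus "f \<in> {f \<in> graph_perms V' E'. f v = w \<and> f w \<noteq> v}" using B_fwd by auto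
qed

private lemma Aimg:
  "{f \<in> graph_perms V' E'. f v = w \<and> f w = v} = (\<lambda>h. \<tau> \<circ> h) ` graph_perms (V - {v}) (delE E v)"
proof (intro set_eqI iffI)
  fix f assume "f \<in> {f \<in> graph_perms V' E'. f v = w \<and> f w = v}"
  hence a: "f \<in> graph_perms V' E'" "f v = w" "f w = v" by auto
  have "f = \<tau> \<circ> (\<tau> \<circ> f)" using tt(2)[of f] by simp
  moreover have "\<tau> \<circ> f \<in> graph_perms (V - {v}) (delE E v)" using A_bwd[OF a] .
  ultimately show "f \<in> (\<lambda>h. \<tau> \<circ> h) ` graph_perms (V - {v}) (delE E v)" by blast
next
  fix f assume "f \<in> (\<lambda>h. \<tau> \<circ> h) ` graph_perms (V - {v}) (delE E v)"
  then obtain g where "g \<in> graph_perms (V - {v}) (delE E v)" "f = \<tau> \<circ> g" by auto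
  thus "f \<in> {f \<in> graph_perms V' E'. f v = w \<and> f w = v}" using A_fwd by auto
qed

private lemma inj1: "inj_on (\<lambda>f. f \<circ> \<tau>) (X :: ('a \<Rightarrow> 'a) set)"
proof (rule inj_onI)
  fix x y :: "'a \<Rightarrow> 'a" assume eq: "x \<circ> \<tau> = y \<circ> \<tau>"
  show "x = y"
  proof (rule ext)
    fix a have "(x \<circ> \<tau>) (\<tau> a) = (y \<circ> \<tau>) (\<tau> a)" using eq by simp
    thus "x a = y a" by simp
  qed
qed

private lemma inj2: "inj_on (\<lambda>h. \<tau> \<circ> h) (X :: ('a \<Rightarrow> 'a) set)"
proof (rule inj_onI)
  fix x y :: "'a \<Rightarrow> 'a" assume eq: "\<tau> \<circ> x = \<tau> \<circ> y"
  show "x = y"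
  proof (rule ext)
    fix a have "\<tau> ((\<tau> \<circ> x) a) = \<tau> ((\<tau> \<circ> y) a)" using eq by simp
    thus "x a = y a" by simp
  qed
qed

lemma split_perms_card:
  "card (graph_perms V' E') = card (graph_perms V E) + card (graph_perms (V - {v}) (delE E v))"
proof -
  let ?P' = "graph_perms V' E'" and ?P = "graph_perms V E" and ?PZ = "graph_perms (V - {v}) (delE E v)"
  have fP': "finite ?P'" using fin' by (rule finite_graph_perms)
  have fP: "finite ?P" using dg by (intro finite_graph_perms) (simp add: digraph_def)
  have fP0: "finite ?PZ" using dg by (intro finite_graph_perms) (simp add: digraph_def)
  have split: "?P' = {f \<in> ?P'. f v = v} \<union> ({f \<in> ?P'. f v = w \<and> f w \<noteq> v} \<union> {f \<in> ?P'. f v = w \<and> f w = v})"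
    using P'_v by blast
  have "card ?P' = card {f \<in> ?P'. f v = v} + card ({f \<in> ?P'. f v = w \<and> f w \<noteq> v} \<union> {f \<in> ?P'. f v = w \<and> f w = v})"
    by (subst split, rule card_Un_disjoint) (use fP' vw in auto)
  also have "card ({f \<in> ?P'. f v = w \<and> f w \<noteq> v} \<union> {f \<in> ?P'. f v = w \<and> f w = v})
      = card {f \<in> ?P'. f v = w \<and> f w \<noteq> v} + card {f \<in> ?P'. f v = w \<and> f w = v}"
    by (rule card_Un_disjoint) (use fP' in auto)
  also have "card {f \<in> ?P'. f v = w \<and> f w \<noteq> v} = card {f \<in> ?P. f v \<noteq> v}"
    unfolding Bimg by (rule card_image[OF inj1])
  also have "card {f \<in> ?P'. f v = w \<and> f w = v} = card ?PZ"
    unfolding Aimg by (rule card_image[OF inj2])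
  also have "{f \<in> ?P'. f v = v} = {f \<in> ?P. f v = v}" by (rule C_eq)
  finally have "card ?P' = card {f \<in> ?P. f v = v} + card {f \<in> ?P. f v \<noteq> v} + card ?PZ" by simp
  also have "card {f \<in> ?P. f v = v} + card {f \<in> ?P. f v \<noteq> v} = card ?P"
  proof -
    have "?P = {f \<in> ?P. f v = v} \<union> {f \<in> ?P. f v \<noteq> v}" by blast
    hence "card ?P = card ({f \<in> ?P. f v = v} \<union> {f \<in> ?P. f v \<noteq> v})" by simp
    also have "\<dots> = card {f \<in> ?P. f v = v} + card {f \<in> ?P. f v \<noteq> v}"
      by (rule card_Un_disjoint) (use fP in auto)
    finally show ?thesis by simp
  qed
  finally show ?thesis .
qed

lemma split_der_card:
  "card (graph_derangements V' E') = card (graph_derangements V E) + card (graph_derangements (V - {v}) (delE E v))"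
proof -
  let ?P' = "graph_perms V' E'" and ?P = "graph_perms V E" and ?PZ = "graph_perms (V - {v}) (delE E v)"
  let ?D' = "graph_derangements V' E'" and ?D = "graph_derangements V E" and ?DZ = "graph_derangements (V - {v}) (delE E v)"
  have fP': "finite ?P'" using fin' by (rule finite_graph_perms)
  have fD': "finite ?D'" using fP' by (simp add: graph_der_alt)
  have split: "?D' = {f \<in> ?D'. f w \<noteq> v} \<union> {f \<in> ?D'. f w = v}" by blast
  have "card ?D' = card {f \<in> ?D'. f w \<noteq> v} + card {f \<in> ?D'. f w = v}"
    by (subst split, rule card_Un_disjoint) (use fD' in auto)
  also have "{f \<in> ?D'. f w \<noteq> v} = (\<lambda>f. f \<circ> \<tau>) ` ?D"
  proof (intro set_eqI iffI)
    fix f assume f: "f \<in> {f \<in> ?D'. f w \<noteq> v}"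
    hence fP: "f \<in> ?P'" and fd: "\<forall>x\<in>V'. f x \<noteq> x" and fwv: "f w \<noteq> v" by (auto simp: graph_der_alt)
    have fv: "f v = w" using P'_v[OF fP] fd vV by auto
    have "f \<in> {f \<in> ?P'. f v = w \<and> f w \<noteq> v}" using fP fv fwv by simp
    then obtain g where g: "g \<in> ?P" "g v \<noteq> v" "f = g \<circ> \<tau>" unfolding Bimg by auto
    have "\<forall>x\<in>V. g x \<noteq> x"
    proof
      fix x assume x: "x \<in> V"
      show "g x \<noteq> x"
      proof (cases "x = v")
        case True thus ?thesis using g by simp
      next
        case False
        have "x \<noteq> w" using x wV by auto
        hence "f x = g x" using g(3) False by simp
        thus ?thesis using fd x by auto
      qed
    qed
    thus "f \<in> (\<lambda>f. f \<circ> \<tau>) ` ?D" using g by (auto simp: graph_der_alt)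
  next
    fix f assume "f \<in> (\<lambda>f. f \<circ> \<tau>) ` ?D"
    then obtain g where g: "g \<in> ?P" "\<forall>x\<in>V. g x \<noteq> x" "f = g \<circ> \<tau>" by (auto simp: graph_der_alt)
    have gv: "g v \<noteq> v" using g vV by auto
    have gp: "g permutes V" using g by (simp add: graph_perms_alt)
    have "g v \<in> V" using permutes_in_image[OF gp] vV by simp
    hence gvw: "g v \<noteq> w" using wV by auto
    have "\<forall>x\<in>V'. f x \<noteq> x"
    proof
      fix x assume x: "x \<in> V'"
      show "f x \<noteq> x"
      proof (cases "x = v")
        case True thus ?thesis using g(3) vw permutes_not_in[OF gp wV] by simp
      next
        case xv: False
        show ?thesis
        proof (cases "x = w")
          case True thus ?thesis using g(3) gvw by simp
        next
          case False thus ?thesis using g x xv by simp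
        qed
      qed
    qed
    moreover have "f \<in> ?P'" "f w \<noteq> v" using B_fwd[OF g(1) gv] g(3) by auto
    ultimately show "f \<in> {f \<in> ?D'. f w \<noteq> v}" by (simp add: graph_der_alt)
  qed
  also have "{f \<in> ?D'. f w = v} = (\<lambda>h. \<tau> \<circ> h) ` ?DZ"
  proof (intro set_eqI iffI)
    fix f assume f: "f \<in> {f \<in> ?D'. f w = v}"
    hence fP: "f \<in> ?P'" and fd: "\<forall>x\<in>V'. f x \<noteq> x" and fwv: "f w = v" by (auto simp: graph_der_alt)
    have fv: "f v = w" using P'_v[OF fP] fd vV by auto
    have "f \<in> {f \<in> ?P'. f v = w \<and> f w = v}" using fP fv fwv by simp
    then obtain h where h: "h \<in> ?PZ" "f = \<tau> \<circ> h" unfolding Aimg by auto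
    have hp: "h permutes V - {v}" using h by (simp add: graph_perms_alt)
    have "\<forall>x\<in>V-{v}. h x \<noteq> x"
    proof
      fix x assume x: "x \<in> V - {v}"
      have "h x \<in> V - {v}" using permutes_in_image[OF hp] x by simp
      hence "h x \<noteq> v" "h x \<noteq> w" using wV by auto
      hence "f x = h x" using h(2) by simp
      thus "h x \<noteq> x" using fd x by auto
    qed
    thus "f \<in> (\<lambda>h. \<tau> \<circ> h) ` ?DZ" using h by (auto simp: graph_der_alt)
  next
    fix f assume "f \<in> (\<lambda>h. \<tau> \<circ> h) ` ?DZ"
    then obtain h where h: "h \<in> ?PZ" "\<forall>x\<in>V-{v}. h x \<noteq> x" "f = \<tau> \<circ> h" by (auto simp: graph_der_alt)
    have hp: "h permutes V - {v}" using h by (simp add: graph_perms_alt)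
    have a: "f \<in> ?P'" "f v = w" "f w = v" using A_fwd[OF h(1)] h(3) by auto
    have "\<forall>x\<in>V'. f x \<noteq> x"
    proof
      fix x assume x: "x \<in> V'"
      show "f x \<noteq> x"
      proof (cases "x = v \<or> x = w")
        case True thus ?thesis using a vw by auto
      next
        case False
        hence xV: "x \<in> V - {v}" using x by auto
        have "h x \<in> V - {v}" using permutes_in_image[OF hp] xV by simp
        hence "h x \<noteq> v" "h x \<noteq> w" using wV by auto
        hence "f x = h x" using h(3) by simp
        thus ?thesis using h(2) xV by auto
      qed
    qed
    thus "f \<in> {f \<in> ?D'. f w = v}" using a by (simp add: graph_der_alt)
  qed
  also have "card ((\<lambda>f. f \<circ> \<tau>) ` ?D) = card ?D" by (rule card_image[OF inj1])
  also have "card ((\<lambda>h. \<tau> \<circ> h) ` ?DZ) = card ?DZ" by (rule card_image[OF inj2])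
  finally show ?thesis .
qed

end


definition LV :: "nat \<Rightarrow> (nat \<Rightarrow> nat set) \<Rightarrow> nat set" where
  "LV k A = {v. v div k \<in> A (v mod k)}"

definition LE :: "nat \<Rightarrow> (nat \<Rightarrow> nat set) \<Rightarrow> (nat \<times> nat) set" where
  "LE k A = {(u,w). u \<in> LV k A \<and> w \<in> LV k A \<and> w mod k = Suc (u mod k) mod k}"

definition BIJ :: "'a set \<Rightarrow> 'b set \<Rightarrow> ('a \<Rightarrow> 'b) set" where
  "BIJ X Y = {g \<in> X \<rightarrow>\<^sub>E Y. bij_betw g X Y}"

lemma card_BIJ:
  assumes "finite X" "finite Y" "card X = card Y"
  shows "card (BIJ X Y) = fact (card X)"
proof -
  obtain h where h: "bij_betw h X Y" using finite_same_card_bij[OF assms] by blast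
  let ?F = "\<lambda>p. restrict (h \<circ> p) X"
  have "bij_betw ?F {p. p permutes X} (BIJ X Y)"
  proof (rule bij_betw_byWitness[where f' = "\<lambda>g x. if x \<in> X then inv_into X h (g x) else x"])
    show "\<forall>p\<in>{p. p permutes X}. (\<lambda>x. if x \<in> X then inv_into X h (?F p x) else x) = p"
    proof
      fix p assume "p \<in> {p. p permutes X}"
      hence p: "p permutes X" by simp
      show "(\<lambda>x. if x \<in> X then inv_into X h (?F p x) else x) = p"
      proof (rule ext)
        fix x show "(if x \<in> X then inv_into X h (?F p x) else x) = p x"
          using p h permutes_in_image[OF p, of x] permutes_not_in[OF p, of x]
          by (auto simp: bij_betw_def)
      qed
    qed
    show "\<forall>g\<in>BIJ X Y. ?F (\<lambda>x. if x \<in> X then inv_into X h (g x) else x) = g"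
    proof
      fix g assume "g \<in> BIJ X Y"
      hence g: "g \<in> X \<rightarrow>\<^sub>E Y" "bij_betw g X Y" by (auto simp: BIJ_def)
      show "?F (\<lambda>x. if x \<in> X then inv_into X h (g x) else x) = g"
      proof (rule ext)
        fix x show "?F (\<lambda>x. if x \<in> X then inv_into X h (g x) else x) x = g x"
          using g h by (auto simp: bij_betw_def f_inv_into_f PiE_def extensional_def)
      qed
    qed
    show "?F ` {p. p permutes X} \<subseteq> BIJ X Y"
    proof
      fix g assume "g \<in> ?F ` {p. p permutes X}"
      then obtain p where p: "p permutes X" and g: "g = ?F p" by auto
      have "bij_betw (h \<circ> p) X Y" using bij_betw_trans[OF permutes_imp_bij[OF p] h] .
      hence "bij_betw g X Y" unfolding g by (simp add: bij_betw_restrict_eq)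
      moreover have "g \<in> X \<rightarrow>\<^sub>E Y" using \<open>bij_betw (h \<circ> p) X Y\<close> unfolding g
        by (auto simp: bij_betw_def)
      ultimately show "g \<in> BIJ X Y" by (simp add: BIJ_def)
    qed
    show "(\<lambda>g x. if x \<in> X then inv_into X h (g x) else x) ` BIJ X Y \<subseteq> {p. p permutes X}"
    proof
      fix q assume "q \<in> (\<lambda>g x. if x \<in> X then inv_into X h (g x) else x) ` BIJ X Y"
      then obtain g where g: "g \<in> BIJ X Y" and q: "q = (\<lambda>x. if x \<in> X then inv_into X h (g x) else x)" by auto
      have gb: "bij_betw g X Y" using g by (simp add: BIJ_def)
      have "bij_betw (inv_into X h \<circ> g) X X" using bij_betw_trans[OF gb bij_betw_inv_into[OF h]] .
      hence "bij_betw q X X" unfolding q by (rule bij_betw_cong[THEN iffD1, rotated]) simp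
      moreover have "\<forall>x. x \<notin> X \<longrightarrow> q x = x" unfolding q by simp
      ultimately show "q \<in> {p. p permutes X}" by (simp add: bij_imp_permutes)
    qed
  qed
  hence "card (BIJ X Y) = card {p. p permutes X}" by (simp add: bij_betw_same_card)
  also have "\<dots> = fact (card X)" using assms(1) by (simp add: card_permutations)
  finally show ?thesis .
qed


context
  fixes k :: nat and A :: "nat \<Rightarrow> nat set"
  assumes k2: "2 \<le> k" and finA: "\<And>i. i < k \<Longrightarrow> finite (A i)"
begin

abbreviation "nx i \<equiv> Suc i mod k"

lemma kpos: "0 < k" using k2 by simp

lemma enc_mod[simp]: "i < k \<Longrightarrow> (i + k * x) mod k = i" by simp
lemma enc_div[simp]: "i < k \<Longrightarrow> (i + k * x) div k = x" by simp
lemma mod_lt[simp]: "v mod k < k" using kpos by simp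
lemma v_enc: "v = v mod k + k * (v div k)" by simp

lemma nx_lt[simp]: "nx i < k" using kpos by simp
lemma nx_neq: "i < k \<Longrightarrow> nx i \<noteq> i"
proof
  assume "i < k" "nx i = i"
  show False
  proof (cases "Suc i < k")
    case True thus False using \<open>nx i = i\<close> by simp
  next
    case False hence "Suc i = k" using \<open>i < k\<close> by simp
    thus False using \<open>nx i = i\<close> k2 by simp
  qed
qed
lemma nx_inj: "i < k \<Longrightarrow> i' < k \<Longrightarrow> nx i = nx i' \<Longrightarrow> i = i'"
proof -
  assume a: "i < k" "i' < k" "nx i = nx i'"
  have "Suc i \<le> k" "Suc i' \<le> k" using a by auto
  thus "i = i'" using a(3) by (cases "Suc i = k"; cases "Suc i' = k") auto
qed

lemma LV_mem: "v \<in> LV k A \<longleftrightarrow> v div k \<in> A (v mod k)" by (simp add: LV_def)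
lemma enc_LV: "i < k \<Longrightarrow> i + k * x \<in> LV k A \<longleftrightarrow> x \<in> A i" by (simp add: LV_def)

lemma LV_finite: "finite (LV k A)"
proof -
  have "LV k A \<subseteq> (\<Union>i<k. (\<lambda>x. i + k * x) ` A i)"
  proof
    fix v assume "v \<in> LV k A"
    hence "v div k \<in> A (v mod k)" by (simp add: LV_def)
    moreover have "v = v mod k + k * (v div k)" by simp
    ultimately show "v \<in> (\<Union>i<k. (\<lambda>x. i + k * x) ` A i)" using mod_lt by blast
  qed
  moreover have "finite (\<Union>i<k. (\<lambda>x. i + k * x) ` A i)" using finA by auto
  ultimately show ?thesis by (rule finite_subset)
qed

lemma LG_digraph: "digraph (LV k A) (LE k A)"
  unfolding digraph_def
proof (intro conjI allI)
  show "finite (LV k A)" by (rule LV_finite)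
  show "LE k A \<subseteq> LV k A \<times> LV k A" by (auto simp: LE_def)
  fix v show "(v, v) \<notin> LE k A" using nx_neq[of "v mod k"] by (auto simp: LE_def)
qed

definition mv :: "(nat \<Rightarrow> nat) \<Rightarrow> nat \<Rightarrow> nat set" where
  "mv f i = {x \<in> A i. f (i + k * x) \<noteq> i + k * x}"

abbreviation "PP \<equiv> graph_perms (LV k A) (LE k A)"

lemma PP_props:
  assumes "f \<in> PP"
  shows "f permutes LV k A" "\<And>v. v \<in> LV k A \<Longrightarrow> f v \<noteq> v \<Longrightarrow> f v \<in> LV k A \<and> f v mod k = nx (v mod k)"
  using assms by (auto simp: graph_perms_alt LE_def)

lemma K1:
  assumes f: "f \<in> PP" and i: "i < k" and x: "x \<in> mv f i"
  shows "f (i + k * x) = nx i + k * (f (i + k * x) div k)" "f (i + k * x) div k \<in> mv f (nx i)"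
proof -
  let ?v = "i + k * x"
  have xA: "x \<in> A i" and mvd: "f ?v \<noteq> ?v" using x by (auto simp: mv_def)
  have vL: "?v \<in> LV k A" using xA i by (simp add: enc_LV)
  have a: "f ?v \<in> LV k A" "f ?v mod k = nx i" using PP_props(2)[OF f vL mvd] i by auto
  show e: "f ?v = nx i + k * (f ?v div k)" using v_enc[of "f ?v"] a(2) by simp
  have yA: "f ?v div k \<in> A (nx i)" using a by (simp add: LV_mem)
  have "f (f ?v) \<noteq> f ?v"
  proof
    assume "f (f ?v) = f ?v"
    hence "f ?v = ?v" using permutes_inj[OF PP_props(1)[OF f]] by (simp add: inj_eq)
    thus False using mvd by simp
  qed
  hence "f (nx i + k * (f ?v div k)) \<noteq> nx i + k * (f ?v div k)" using e by simp
  thus "f ?v div k \<in> mv f (nx i)" using yA by (simp add: mv_def)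
qed

lemma K3:
  assumes f: "f \<in> PP" and i: "i < k" and y: "y \<in> mv f (nx i)"
  shows "\<exists>x \<in> mv f i. f (i + k * x) = nx i + k * y"
proof -
  let ?w = "nx i + k * y"
  have yA: "y \<in> A (nx i)" and mvd: "f ?w \<noteq> ?w" using y by (auto simp: mv_def)
  have wL: "?w \<in> LV k A" using yA by (simp add: enc_LV)
  have fp: "f permutes LV k A" using PP_props(1)[OF f] .
  have "?w \<in> f ` LV k A" using permutes_image[OF fp] wL by simp
  then obtain u where u: "u \<in> LV k A" "f u = ?w" by auto
  have un: "f u \<noteq> u" using u mvd by auto
  have "f u mod k = nx (u mod k)" using PP_props(2)[OF f u(1) un] by simp
  hence "nx i = nx (u mod k)" using u(2) by simp
  hence ui: "u mod k = i" using nx_inj[OF i mod_lt] by simp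
  have ue: "u = i + k * (u div k)" using v_enc[of u] ui by simp
  have "u div k \<in> A i" using u(1) ui by (simp add: LV_mem)
  hence "u div k \<in> mv f i" using un ue by (simp add: mv_def)
  thus ?thesis using u(2) ue by metis
qed

lemma mv_bij:
  assumes f: "f \<in> PP" and i: "i < k"
  shows "bij_betw (\<lambda>x. f (i + k * x) div k) (mv f i) (mv f (nx i))"
proof -
  have fp: "f permutes LV k A" using PP_props(1)[OF f] .
  have "inj_on (\<lambda>x. f (i + k * x) div k) (mv f i)"
  proof (rule inj_onI)
    fix x x' assume x: "x \<in> mv f i" and x': "x' \<in> mv f i" and eq: "f (i + k * x) div k = f (i + k * x') div k"
    have "f (i + k * x) = f (i + k * x')" using K1(1)[OF f i x] K1(1)[OF f i x'] eq by metis
    hence "i + k * x = i + k * x'" using permutes_inj[OF fp] by (simp add: inj_eq)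
    thus "x = x'" using kpos by simp
  qed
  moreover have "(\<lambda>x. f (i + k * x) div k) ` mv f i = mv f (nx i)"
  proof
    show "(\<lambda>x. f (i + k * x) div k) ` mv f i \<subseteq> mv f (nx i)" using K1(2)[OF f i] by auto
    show "mv f (nx i) \<subseteq> (\<lambda>x. f (i + k * x) div k) ` mv f i"
    proof
      fix y assume "y \<in> mv f (nx i)"
      then obtain x where "x \<in> mv f i" "f (i + k * x) = nx i + k * y" using K3[OF f i] by blast
      thus "y \<in> (\<lambda>x. f (i + k * x) div k) ` mv f i" by (intro image_eqI[of _ _ x]) simp_all
    qed
  qed
  ultimately show ?thesis by (simp add: bij_betw_def)
qed

lemma mv_sub: "mv f i \<subseteq> A i" by (auto simp: mv_def)

lemma mv_card:
  assumes f: "f \<in> PP" and i: "i < k"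
  shows "card (mv f i) = card (mv f 0)"
  using i
proof (induction i)
  case 0 thus ?case by simp
next
  case (Suc i)
  hence "nx i = Suc i" by simp
  hence "card (mv f (Suc i)) = card (mv f i)" using bij_betw_same_card[OF mv_bij[OF f, of i]] Suc by simp
  thus ?case using Suc by simp
qed

definition PM :: "(nat \<Rightarrow> nat set) \<Rightarrow> (nat \<Rightarrow> nat) set" where
  "PM M = {f \<in> PP. \<forall>i<k. mv f i = M i}"

definition Psi :: "(nat \<Rightarrow> nat set) \<Rightarrow> (nat \<Rightarrow> nat \<Rightarrow> nat) \<Rightarrow> nat \<Rightarrow> nat" where
  "Psi M g v = (if v \<in> LV k A \<and> v div k \<in> M (v mod k) then nx (v mod k) + k * g (v mod k) (v div k) else v)"

definition Phi :: "(nat \<Rightarrow> nat) \<Rightarrow> nat \<Rightarrow> nat \<Rightarrow> nat" where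
  "Phi f = (\<lambda>i\<in>{..<k}. \<lambda>x\<in>mv f i. f (i + k * x) div k)"

abbreviation "GS M \<equiv> (\<Pi>\<^sub>E i\<in>{..<k}. BIJ (M i) (M (nx i)))"

lemma Phi_in:
  assumes f: "f \<in> PM M" shows "Phi f \<in> GS M"
proof -
  have fP: "f \<in> PP" and mvM: "\<And>i. i < k \<Longrightarrow> mv f i = M i" using f by (auto simp: PM_def)
  have "(\<lambda>x\<in>mv f i. f (i + k * x) div k) \<in> BIJ (M i) (M (nx i))" if i: "i < k" for i
  proof -
    have b: "bij_betw (\<lambda>x. f (i + k * x) div k) (M i) (M (nx i))"
      using mv_bij[OF fP i] mvM[OF i] mvM[OF nx_lt] by simp
    hence "bij_betw (\<lambda>x\<in>M i. f (i + k * x) div k) (M i) (M (nx i))"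
      by (simp add: bij_betw_restrict_eq)
    moreover have "(\<lambda>x\<in>M i. f (i + k * x) div k) \<in> M i \<rightarrow>\<^sub>E M (nx i)"
      using b by (auto simp: bij_betw_def)
    ultimately show ?thesis using mvM[OF i] by (simp add: BIJ_def)
  qed
  thus ?thesis by (auto simp: Phi_def)
qed

lemma Psi_Phi: "f \<in> PM M \<Longrightarrow> Psi M (Phi f) = f"
proof (rule ext)
  fix v assume f: "f \<in> PM M"
  hence fP: "f \<in> PP" and mvM: "\<And>i. i < k \<Longrightarrow> mv f i = M i" by (auto simp: PM_def)
  show "Psi M (Phi f) v = f v"
  proof (cases "v \<in> LV k A \<and> v div k \<in> M (v mod k)")
    case True
    let ?i = "v mod k" and ?x = "v div k"
    have x: "?x \<in> mv f ?i" using True mvM[of ?i] by simp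
    have ve: "v = ?i + k * ?x" by simp
    have "f v = nx ?i + k * (f v div k)" using K1(1)[OF fP mod_lt x] ve by metis
    thus ?thesis using True x by (simp add: Psi_def Phi_def)
  next
    case False
    have "f v = v"
    proof (cases "v \<in> LV k A")
      case True
      hence xA: "v div k \<in> A (v mod k)" by (simp add: LV_mem)
      have "v div k \<notin> mv f (v mod k)" using False True mvM[of "v mod k"] by simp
      thus ?thesis using xA by (simp add: mv_def)
    next
      case False thus ?thesis using permutes_not_in[OF PP_props(1)[OF fP]] by simp
    qed
    thus ?thesis using False by (auto simp: Psi_def)
  qed
qed

context
  fixes M g
  assumes MA: "\<And>i. i < k \<Longrightarrow> M i \<subseteq> A i" and g: "g \<in> GS M"
begin

lemma g_bij: "i < k \<Longrightarrow> bij_betw (g i) (M i) (M (nx i))"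
  using g by (auto simp: BIJ_def)

lemma g_in: "i < k \<Longrightarrow> x \<in> M i \<Longrightarrow> g i x \<in> M (nx i)"
  using g_bij by (auto simp: bij_betw_def)

lemma Psi_moved:
  assumes "v \<in> LV k A" "v div k \<in> M (v mod k)"
  shows "Psi M g v \<in> LV k A" "Psi M g v mod k = nx (v mod k)" "Psi M g v div k = g (v mod k) (v div k)"
    "Psi M g v div k \<in> M (nx (v mod k))"
proof -
  have gi: "g (v mod k) (v div k) \<in> M (nx (v mod k))" using g_in assms by simp
  show "Psi M g v mod k = nx (v mod k)" "Psi M g v div k = g (v mod k) (v div k)"
    using assms by (simp_all add: Psi_def)
  thus "Psi M g v \<in> LV k A" "Psi M g v div k \<in> M (nx (v mod k))"
    using gi MA[of "nx (v mod k)"] by (auto simp: LV_mem)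
qed

lemma Psi_perm: "Psi M g permutes LV k A"
proof -
  let ?F = "Psi M g"
  have sub: "?F ` LV k A \<subseteq> LV k A"
  proof
    fix u assume "u \<in> ?F ` LV k A"
    then obtain v where v: "v \<in> LV k A" "u = ?F v" by auto
    show "u \<in> LV k A"
    proof (cases "v div k \<in> M (v mod k)")
      case True thus ?thesis using Psi_moved v by simp
    next
      case False thus ?thesis using v by (simp add: Psi_def)
    qed
  qed
  have inj: "inj_on ?F (LV k A)"
  proof (rule inj_onI)
    fix v v' assume v: "v \<in> LV k A" and v': "v' \<in> LV k A" and eq: "?F v = ?F v'"
    show "v = v'"
    proof (cases "v div k \<in> M (v mod k)"; cases "v' div k \<in> M (v' mod k)")
      assume a: "v div k \<in> M (v mod k)" and b: "v' div k \<in> M (v' mod k)"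
      have "nx (v mod k) = nx (v' mod k)" using Psi_moved(2)[OF v a] Psi_moved(2)[OF v' b] eq by simp
      hence m: "v mod k = v' mod k" using nx_inj mod_lt by blast
      have "g (v mod k) (v div k) = g (v mod k) (v' div k)"
        using Psi_moved(3)[OF v a] Psi_moved(3)[OF v' b] eq m by simp
      hence "v div k = v' div k" using g_bij[OF mod_lt, of v] a b m by (auto simp: bij_betw_def inj_on_def)
      thus ?thesis using m by (metis v_enc)
    next
      assume a: "v div k \<in> M (v mod k)" and b: "v' div k \<notin> M (v' mod k)"
      have "?F v' = v'" using b by (simp add: Psi_def)
      hence "v' div k \<in> M (v' mod k)" using Psi_moved(2,4)[OF v a] eq by simp
      thus ?thesis using b by simp
    next
      assume a: "v div k \<notin> M (v mod k)" and b: "v' div k \<in> M (v' mod k)"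
      have "?F v = v" using a by (simp add: Psi_def)
      hence "v div k \<in> M (v mod k)" using Psi_moved(2,4)[OF v' b] eq by simp
      thus ?thesis using a by simp
    next
      assume a: "v div k \<notin> M (v mod k)" and b: "v' div k \<notin> M (v' mod k)"
      thus ?thesis using eq by (simp add: Psi_def)
    qed
  qed
  have "?F ` LV k A = LV k A" using endo_inj_surj[OF LV_finite sub inj] .
  hence "bij_betw ?F (LV k A) (LV k A)" using inj by (simp add: bij_betw_def)
  moreover have "\<forall>x. x \<notin> LV k A \<longrightarrow> ?F x = x" by (simp add: Psi_def)
  ultimately show ?thesis by (simp add: bij_imp_permutes)
qed

lemma Psi_PM: "Psi M g \<in> PM M"
proof -
  let ?F = "Psi M g"
  have "\<forall>v\<in>LV k A. ?F v = v \<or> (v, ?F v) \<in> LE k A"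
  proof
    fix v assume v: "v \<in> LV k A"
    show "?F v = v \<or> (v, ?F v) \<in> LE k A"
    proof (cases "v div k \<in> M (v mod k)")
      case True thus ?thesis using Psi_moved[OF v True] v by (simp add: LE_def)
    next
      case False thus ?thesis by (simp add: Psi_def)
    qed
  qed
  hence FP: "?F \<in> PP" using Psi_perm by (simp add: graph_perms_alt)
  have "\<forall>i<k. mv ?F i = M i"
  proof (intro allI impI set_eqI iffI)
    fix i x assume i: "i < k"
    { assume x: "x \<in> mv ?F i"
      hence xA: "x \<in> A i" and ne: "?F (i + k * x) \<noteq> i + k * x" by (auto simp: mv_def)
      show "x \<in> M i"
      proof (rule ccontr)
        assume "x \<notin> M i" thus False using ne i by (simp add: Psi_def)
      qed }
    { assume x: "x \<in> M i"
      hence xA: "x \<in> A i" using MA i by auto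
      have vL: "i + k * x \<in> LV k A" using xA i by (simp add: enc_LV)
      have "?F (i + k * x) mod k = nx i" using Psi_moved(2)[of "i + k * x"] vL x i by simp
      hence "?F (i + k * x) \<noteq> i + k * x" using nx_neq[OF i] i by auto
      thus "x \<in> mv ?F i" using xA by (simp add: mv_def) }
  qed
  thus ?thesis using FP by (simp add: PM_def)
qed

lemma Phi_Psi: "Phi (Psi M g) = g"
proof (rule ext)
  fix i show "Phi (Psi M g) i = g i"
  proof (cases "i < k")
    case False thus ?thesis using g by (simp add: Phi_def PiE_def extensional_def)
  next
    case True
    have mvM: "mv (Psi M g) i = M i" using Psi_PM True by (simp add: PM_def)
    show ?thesis
    proof (rule ext)
      fix x show "Phi (Psi M g) i x = g i x"
      proof (cases "x \<in> M i")
        case False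
        have "g i \<in> extensional (M i)" using g True by (auto simp: PiE_def BIJ_def)
        thus ?thesis using False True mvM by (simp add: Phi_def extensional_def)
      next
        case xM: True
        have vL: "i + k * x \<in> LV k A" using xM MA[OF True] True by (auto simp: enc_LV)
        have "Psi M g (i + k * x) div k = g i x" using Psi_moved(3)[of "i + k * x"] vL xM True by simp
        thus ?thesis using xM True mvM by (simp add: Phi_def)
      qed
    qed
  qed
qed

end

lemma card_PM:
  assumes MA: "\<And>i. i < k \<Longrightarrow> M i \<subseteq> A i" and cM: "\<And>i. i < k \<Longrightarrow> card (M i) = j"
  shows "card (PM M) = fact j ^ k"
proof -
  have "bij_betw Phi (PM M) (GS M)"
  proof (rule bij_betw_byWitness[where f' = "Psi M"])
    show "\<forall>f\<in>PM M. Psi M (Phi f) = f" using Psi_Phi by blast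
    show "\<forall>g\<in>GS M. Phi (Psi M g) = g" using Phi_Psi[OF MA] by blast
    show "Phi ` PM M \<subseteq> GS M" using Phi_in by blast
    show "Psi M ` GS M \<subseteq> PM M" using Psi_PM[OF MA] by blast
  qed
  hence "card (PM M) = card (GS M)" by (rule bij_betw_same_card)
  also have "\<dots> = (\<Prod>i<k. card (BIJ (M i) (M (nx i))))" by (simp add: card_PiE)
  also have "\<dots> = (\<Prod>i<k. fact j)"
  proof (rule prod.cong[OF refl])
    fix i assume i: "i \<in> {..<k}"
    have f1: "finite (M i)" using finA[of i] MA[of i] i finite_subset by auto
    have f2: "finite (M (nx i))" using finA[of "nx i"] MA[of "nx i"] finite_subset by auto
    have "card (M i) = card (M (nx i))" using cM i by simp
    thus "card (BIJ (M i) (M (nx i))) = fact j" using card_BIJ[OF f1 f2] cM i by simp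
  qed
  also have "\<dots> = fact j ^ k" by simp
  finally show ?thesis .
qed

abbreviation "MS j \<equiv> (\<Pi>\<^sub>E i\<in>{..<k}. {S. S \<subseteq> A i \<and> card S = j})"

lemma MS_finite: "finite (MS j)"
proof -
  have "finite {S. S \<subseteq> A i \<and> card S = j}" if "i < k" for i
  proof -
    have "finite (Pow (A i))" using finA[OF that] by simp
    thus ?thesis by (rule finite_subset[rotated]) auto
  qed
  thus ?thesis by (intro finite_PiE) auto
qed

lemma MS_card: "card (MS j) = (\<Prod>i<k. card (A i) choose j)"
  by (simp add: card_PiE n_subsets finA)

lemma PM_sub: "PM M \<subseteq> PP" by (auto simp: PM_def)

lemma PP_finite: "finite PP"
  using LG_digraph by (intro finite_graph_perms) (simp add: digraph_def)

lemma card_PP: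
  "card PP = (\<Sum>j\<le>card (A 0). (\<Prod>i<k. card (A i) choose j) * fact j ^ k)"
proof -
  let ?N = "card (A 0)"
  let ?MM = "\<Union>j\<in>{..?N}. MS j"
  have eq: "PP = (\<Union>M\<in>?MM. PM M)"
  proof
    show "PP \<subseteq> (\<Union>M\<in>?MM. PM M)"
    proof
      fix f assume f: "f \<in> PP"
      let ?M = "\<lambda>i\<in>{..<k}. mv f i"
      have "?M \<in> MS (card (mv f 0))"
      proof (rule PiE_I)
        fix i assume "i \<in> {..<k}"
        thus "?M i \<in> {S. S \<subseteq> A i \<and> card S = card (mv f 0)}"
          using mv_card[OF f, of i] mv_sub[of f i] by simp
      qed simp
      moreover have "card (mv f 0) \<le> ?N" using card_mono[OF finA[OF kpos] mv_sub[of f 0]] .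
      moreover have "f \<in> PM ?M" using f by (simp add: PM_def)
      ultimately show "f \<in> (\<Union>M\<in>?MM. PM M)" by blast
    qed
    show "(\<Union>M\<in>?MM. PM M) \<subseteq> PP" using PM_sub by blast
  qed
  have "card PP = (\<Sum>M\<in>?MM. card (PM M))"
    unfolding eq
  proof (rule card_UN_disjoint)
    show "finite ?MM" using MS_finite by (intro finite_UN_I) auto
    show "\<forall>M\<in>?MM. finite (PM M)"
    proof
      fix M show "finite (PM M)" using finite_subset[OF PM_sub PP_finite] .
    qed
    show "\<forall>M\<in>?MM. \<forall>M'\<in>?MM. M \<noteq> M' \<longrightarrow> PM M \<inter> PM M' = {}"
    proof (intro ballI impI)
      fix M M' assume M: "M \<in> ?MM" and M': "M' \<in> ?MM" and ne: "M \<noteq> M'"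
      show "PM M \<inter> PM M' = {}"
      proof (rule ccontr)
        assume "PM M \<inter> PM M' \<noteq> {}"
        then obtain f where "f \<in> PM M" "f \<in> PM M'" by blast
        hence "\<And>i. i < k \<Longrightarrow> M i = M' i" by (auto simp: PM_def)
        moreover have "M \<in> extensional {..<k}" "M' \<in> extensional {..<k}"
          using M M' by (auto simp: PiE_iff)
        ultimately have "M = M'" by (intro extensionalityI[of M "{..<k}" M']) auto
        thus False using ne by simp
      qed
    qed
  qed
  also have "\<dots> = (\<Sum>j\<le>?N. \<Sum>M\<in>MS j. card (PM M))"
  proof (rule sum.UNION_disjoint)
    show "finite {..?N}" by simp
    show "\<forall>j\<in>{..?N}. finite (MS j)" using MS_finite by simp
    show "\<forall>j\<in>{..?N}. \<forall>j'\<in>{..?N}. j \<noteq> j' \<longrightarrow> MS j \<inter> MS j' = {}"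
    proof (intro ballI impI)
      fix j j' :: nat assume "j \<noteq> j'"
      show "MS j \<inter> MS j' = {}"
      proof (rule ccontr)
        assume "MS j \<inter> MS j' \<noteq> {}"
        then obtain M where M: "M \<in> MS j" "M \<in> MS j'" by blast
        have "0 \<in> {..<k}" using kpos by simp
        hence "card (M 0) = j" "card (M 0) = j'" using PiE_mem[OF M(1)] PiE_mem[OF M(2)] by auto
        thus False using \<open>j \<noteq> j'\<close> by simp
      qed
    qed
  qed
  also have "\<dots> = (\<Sum>j\<le>?N. card (MS j) * fact j ^ k)"
  proof (rule sum.cong[OF refl])
    fix j assume "j \<in> {..?N}"
    have "(\<Sum>M\<in>MS j. card (PM M)) = (\<Sum>M\<in>MS j. fact j ^ k)"
    proof (rule sum.cong[OF refl])
      fix M assume M: "M \<in> MS j"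
      have "\<And>i. i < k \<Longrightarrow> M i \<in> {S. S \<subseteq> A i \<and> card S = j}" using PiE_mem[OF M] by simp
      thus "card (PM M) = fact j ^ k" by (intro card_PM) auto
    qed
    thus "(\<Sum>M\<in>MS j. card (PM M)) = card (MS j) * fact j ^ k" by simp
  qed
  finally show ?thesis by (simp add: MS_card)
qed

lemma DD_eq: "graph_derangements (LV k A) (LE k A) = PM A"
proof (intro set_eqI iffI)
  fix f assume "f \<in> graph_derangements (LV k A) (LE k A)"
  hence fP: "f \<in> PP" and d: "\<forall>v\<in>LV k A. f v \<noteq> v" by (auto simp: graph_der_alt)
  have "\<forall>i<k. mv f i = A i"
  proof (intro allI impI)
    fix i assume i: "i < k"
    show "mv f i = A i"
    proof
      show "mv f i \<subseteq> A i" by (rule mv_sub)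
      show "A i \<subseteq> mv f i"
      proof
        fix x assume x: "x \<in> A i"
        hence "i + k * x \<in> LV k A" using i by (simp add: enc_LV)
        hence "f (i + k * x) \<noteq> i + k * x" using d by blast
        thus "x \<in> mv f i" using x by (simp add: mv_def)
      qed
    qed
  qed
  thus "f \<in> PM A" using fP by (simp add: PM_def)
next
  fix f assume "f \<in> PM A"
  hence fP: "f \<in> PP" and m: "\<forall>i<k. mv f i = A i" by (auto simp: PM_def)
  have "\<forall>v\<in>LV k A. f v \<noteq> v"
  proof
    fix v assume v: "v \<in> LV k A"
    have "v div k \<in> mv f (v mod k)" using m v by (simp add: LV_mem)
    thus "f v \<noteq> v" by (simp add: mv_def)
  qed
  thus "f \<in> graph_derangements (LV k A) (LE k A)" using fP by (simp add: graph_der_alt)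
qed

lemma card_DD_eq:
  assumes "\<And>i. i < k \<Longrightarrow> card (A i) = n"
  shows "card (graph_derangements (LV k A) (LE k A)) = fact n ^ k"
  unfolding DD_eq using assms by (intro card_PM) auto

lemma card_DD_zero:
  assumes "i < k" "card (A i) \<noteq> card (A 0)"
  shows "card (graph_derangements (LV k A) (LE k A)) = 0"
proof -
  have "PM A = {}"
  proof (rule ccontr)
    assume "PM A \<noteq> {}"
    then obtain f where f: "f \<in> PM A" by blast
    hence fP: "f \<in> PP" and m: "\<forall>i<k. mv f i = A i" by (auto simp: PM_def)
    have "card (mv f i) = card (mv f 0)" using mv_card[OF fP assms(1)] .
    thus False using m assms kpos by simp
  qed
  thus ?thesis unfolding DD_eq by simp
qed

end



lemma split_digraph:
  assumes "digraph V E" "v \<in> V" "w \<notin> V"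
  shows "digraph (insert w V) (splitE E v w)"
proof -
  have fin: "finite V" and EV: "E \<subseteq> V \<times> V" and nl: "\<forall>x. (x, x) \<notin> E"
    using assms(1) by (auto simp: digraph_def)
  have vw: "v \<noteq> w" using assms by auto
  have "splitE E v w \<subseteq> insert w V \<times> insert w V"
  proof
    fix e assume "e \<in> splitE E v w"
    thus "e \<in> insert w V \<times> insert w V"
      unfolding splitE_def using EV assms(2) by blast
  qed
  moreover have "\<forall>x. (x, x) \<notin> splitE E v w"
  proof
    fix x show "(x, x) \<notin> splitE E v w"
    proof
      assume "(x, x) \<in> splitE E v w"
      hence "(x, x) \<in> E \<or> (x = w \<and> (v, w) \<in> E) \<or> v = w" unfolding splitE_def by blast
      thus False using nl EV assms(3) vw by blast
    qed
  qed
  ultimately show ?thesis using fin by (simp add: digraph_def)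
qed

lemma split_del_comm:
  assumes "s \<noteq> v" "s \<noteq> w"
  shows "delE (splitE E v w) s = splitE (delE E s) v w"
proof (rule set_eqI)
  fix e :: "'a \<times> 'a"
  obtain a b where e: "e = (a, b)" by (cases e)
  show "e \<in> delE (splitE E v w) s \<longleftrightarrow> e \<in> splitE (delE E s) v w"
    unfolding e delE_def splitE_def using assms by auto
qed

primrec GV :: "nat \<Rightarrow> nat \<Rightarrow> (nat \<Rightarrow> nat set) \<Rightarrow> nat \<Rightarrow> nat set" where
  "GV k m A 0 = LV k A"
| "GV k m A (Suc t) = insert (k * m + t) (GV k m A t)"

primrec GE :: "nat \<Rightarrow> nat \<Rightarrow> (nat \<Rightarrow> nat set) \<Rightarrow> nat \<Rightarrow> (nat \<times> nat) set" where
  "GE k m A 0 = LE k A"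
| "GE k m A (Suc t) = splitE (GE k m A t) t (k * m + t)"

definition AS :: "(nat \<Rightarrow> nat set) \<Rightarrow> nat set \<Rightarrow> nat \<Rightarrow> nat set" where
  "AS A S = (\<lambda>i. if i \<in> S then A i - {0} else A i)"

lemma sum_Pow_insert:
  fixes f :: "nat set \<Rightarrow> 'b::comm_monoid_add"
  assumes "finite X" "a \<notin> X"
  shows "(\<Sum>S\<in>Pow (insert a X). f S) = (\<Sum>S\<in>Pow X. f S) + (\<Sum>S\<in>Pow X. f (insert a S))"
proof -
  have "Pow (insert a X) = Pow X \<union> insert a ` Pow X" by (rule Pow_insert)
  moreover have "Pow X \<inter> insert a ` Pow X = {}" using assms(2) by auto
  moreover have "inj_on (insert a) (Pow X)" using assms(2) by (auto simp: inj_on_def)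
  ultimately show ?thesis using assms(1)
    by (simp add: sum.union_disjoint sum.reindex)
qed

context
  fixes k m :: nat
  assumes k2: "2 \<le> k" and m1: "1 \<le> m"
begin

lemma LV_bound:
  assumes "\<And>i. i < k \<Longrightarrow> A i \<subseteq> {..<m}" "v \<in> LV k A"
  shows "v < k * m"
proof -
  have "v div k < m" using assms(2) assms(1)[of "v mod k"] k2 by (auto simp: LV_def)
  hence "Suc (v div k) \<le> m" by simp
  hence "k * Suc (v div k) \<le> k * m" by (rule mult_le_mono2)
  moreover have "v < k * Suc (v div k)" using k2
    by (metis add.commute div_mult_mod_eq mod_less_divisor mult.commute mult_Suc_right nat_add_left_cancel_less zero_less_iff_neq_zero not_numeral_le_zero)
  ultimately show ?thesis by simp
qed

lemma GV_eq: "GV k m A t = LV k A \<union> {k * m + s | s. s < t}"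
  by (induction t) (auto simp: less_Suc_eq)

lemma LV_del:
  assumes "s < k"
  shows "LV k A - {s} = LV k (A(s := A s - {0}))"
proof (rule set_eqI)
  fix v
  have ve: "v = v mod k + k * (v div k)" by simp
  show "v \<in> LV k A - {s} \<longleftrightarrow> v \<in> LV k (A(s := A s - {0}))"
  proof (cases "v mod k = s")
    case True
    have "v = s \<longleftrightarrow> v div k = 0"
    proof
      assume "v = s" thus "v div k = 0" using assms by simp
    next
      assume "v div k = 0" thus "v = s" using ve True by simp
    qed
    thus ?thesis using True by (simp add: LV_def)
  next
    case False
    have "v \<noteq> s" using False assms by auto
    thus ?thesis using False by (simp add: LV_def)
  qed
qed

lemma LV_del_mem:
  assumes "s < k"
  shows "x \<in> LV k (A(s := A s - {0})) \<longleftrightarrow> x \<in> LV k A \<and> x \<noteq> s"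
  using LV_del[OF assms, of A] by blast

lemma LE_del:
  assumes "s < k"
  shows "delE (LE k A) s = LE k (A(s := A s - {0}))"
proof (rule set_eqI)
  fix e :: "nat \<times> nat"
  obtain a b where e: "e = (a, b)" by (cases e)
  show "e \<in> delE (LE k A) s \<longleftrightarrow> e \<in> LE k (A(s := A s - {0}))"
    unfolding e delE_def LE_def using LV_del_mem[OF assms, of _ A] by auto
qed

lemma G_del:
  assumes "\<And>i. i < k \<Longrightarrow> A i \<subseteq> {..<m}" "t \<le> s" "s < k"
  shows "GV k m A t - {s} = GV k m (A(s := A s - {0})) t \<and> delE (GE k m A t) s = GE k m (A(s := A s - {0})) t"
  using assms(2)
proof (induction t)
  case 0
  have "GV k m A 0 - {s} = GV k m (A(s := A s - {0})) 0" using LV_del[OF assms(3), of A] by simp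
  moreover have "delE (GE k m A 0) s = GE k m (A(s := A s - {0})) 0" using LE_del[OF assms(3), of A] by simp
  ultimately show ?case by blast
next
  case (Suc t)
  have ne: "s \<noteq> k * m + t"
  proof -
    have "k * 1 \<le> k * m" using m1 by (rule mult_le_mono2)
    thus ?thesis using assms(3) by linarith
  qed
  have st: "s \<noteq> t" using Suc by simp
  have IH: "GV k m A t - {s} = GV k m (A(s := A s - {0})) t"
     "delE (GE k m A t) s = GE k m (A(s := A s - {0})) t" using Suc.IH Suc.prems by (simp_all add: fun_upd_def)
  have 1: "GV k m A (Suc t) - {s} = GV k m (A(s := A s - {0})) (Suc t)"
    using IH(1) ne by (simp add: insert_Diff_if)
  have 2: "delE (GE k m A (Suc t)) s = GE k m (A(s := A s - {0})) (Suc t)"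
    using split_del_comm[OF st ne, of "GE k m A t"] IH(2) by simp
  show ?case using 1 2 by blast
qed

lemma G_digraph_fresh:
  assumes hA: "\<And>i. i < k \<Longrightarrow> A i \<subseteq> {..<m}" and t: "t \<le> k" and z: "\<And>i. i < t \<Longrightarrow> 0 \<in> A i"
  shows "digraph (GV k m A t) (GE k m A t)"
  using t z
proof (induction t)
  case 0
  have "\<And>i. i < k \<Longrightarrow> finite (A i)" using hA finite_subset by blast
  thus ?case using LG_digraph k2 by simp
next
  case (Suc t)
  have d: "digraph (GV k m A t) (GE k m A t)" using Suc by simp
  have "t mod k = t" "t div k = 0" using Suc by auto
  hence tin: "t \<in> GV k m A t" using Suc(3)[of t] by (simp add: GV_eq LV_def)
  have "k * m + t \<notin> GV k m A t" using LV_bound[of A, OF hA] by (auto simp: GV_eq)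
  thus ?case using split_digraph[OF d tin] by simp
qed

lemma G_sum:
  assumes "\<And>i. i < k \<Longrightarrow> A i \<subseteq> {..<m}" "t \<le> k" "\<And>i. i < t \<Longrightarrow> 0 \<in> A i"
  shows "card (graph_perms (GV k m A t) (GE k m A t)) = (\<Sum>S\<in>Pow {..<t}. card (graph_perms (LV k (AS A S)) (LE k (AS A S))))
       \<and> card (graph_derangements (GV k m A t) (GE k m A t)) = (\<Sum>S\<in>Pow {..<t}. card (graph_derangements (LV k (AS A S)) (LE k (AS A S))))"
  using assms
proof (induction t arbitrary: A)
  case 0 thus ?case by (simp add: AS_def)
next
  case (Suc t)
  let ?A' = "A(t := A t - {0})"
  have A': "\<And>i. i < k \<Longrightarrow> ?A' i \<subseteq> {..<m}" "\<And>i. i < t \<Longrightarrow> 0 \<in> ?A' i" using Suc.prems by auto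
  have IH1: "card (graph_perms (GV k m A t) (GE k m A t)) = (\<Sum>S\<in>Pow {..<t}. card (graph_perms (LV k (AS A S)) (LE k (AS A S))))
       \<and> card (graph_derangements (GV k m A t) (GE k m A t)) = (\<Sum>S\<in>Pow {..<t}. card (graph_derangements (LV k (AS A S)) (LE k (AS A S))))"
    by (rule Suc.IH[of A]) (use Suc.prems in simp_all)
  have IH2: "card (graph_perms (GV k m ?A' t) (GE k m ?A' t)) = (\<Sum>S\<in>Pow {..<t}. card (graph_perms (LV k (AS ?A' S)) (LE k (AS ?A' S))))
       \<and> card (graph_derangements (GV k m ?A' t) (GE k m ?A' t)) = (\<Sum>S\<in>Pow {..<t}. card (graph_derangements (LV k (AS ?A' S)) (LE k (AS ?A' S))))"
    by (rule Suc.IH[of ?A', OF A'(1) _ A'(2)]) (use Suc.prems(2) in simp_all)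
  have AS': "AS ?A' S = AS A (insert t S)" if "S \<in> Pow {..<t}" for S
    using that by (auto simp: AS_def fun_eq_iff)
  have d: "digraph (GV k m A t) (GE k m A t)" using G_digraph_fresh[of A t] Suc.prems by simp
  have "t mod k = t" "t div k = 0" using Suc.prems by auto
  hence tin: "t \<in> GV k m A t" using Suc.prems(3)[of t] by (simp add: GV_eq LV_def)
  have fresh: "k * m + t \<notin> GV k m A t" using LV_bound[of A, OF Suc.prems(1)] by (auto simp: GV_eq)
  have del: "GV k m A t - {t} = GV k m ?A' t" "delE (GE k m A t) t = GE k m ?A' t"
    using G_del[of A t t] Suc.prems by auto
  have pow: "Pow {..<Suc t} = Pow (insert t {..<t})" by (simp add: lessThan_Suc)
  show ?case
  proof
    have "card (graph_perms (GV k m A (Suc t)) (GE k m A (Suc t)))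
        = card (graph_perms (GV k m A t) (GE k m A t)) + card (graph_perms (GV k m ?A' t) (GE k m ?A' t))"
      using split_perms_card[OF d tin fresh] del by simp
    also have "\<dots> = (\<Sum>S\<in>Pow {..<t}. card (graph_perms (LV k (AS A S)) (LE k (AS A S))))
        + (\<Sum>S\<in>Pow {..<t}. card (graph_perms (LV k (AS A (insert t S))) (LE k (AS A (insert t S)))))"
      using IH1 IH2 AS' by simp
    also have "\<dots> = (\<Sum>S\<in>Pow {..<Suc t}. card (graph_perms (LV k (AS A S)) (LE k (AS A S))))"
      unfolding pow by (rule sum_Pow_insert[symmetric]) auto
    finally show "card (graph_perms (GV k m A (Suc t)) (GE k m A (Suc t))) = (\<Sum>S\<in>Pow {..<Suc t}. card (graph_perms (LV k (AS A S)) (LE k (AS A S))))" .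
    have "card (graph_derangements (GV k m A (Suc t)) (GE k m A (Suc t)))
        = card (graph_derangements (GV k m A t) (GE k m A t)) + card (graph_derangements (GV k m ?A' t) (GE k m ?A' t))"
      using split_der_card[OF d tin fresh] del by simp
    also have "\<dots> = (\<Sum>S\<in>Pow {..<t}. card (graph_derangements (LV k (AS A S)) (LE k (AS A S))))
        + (\<Sum>S\<in>Pow {..<t}. card (graph_derangements (LV k (AS A (insert t S))) (LE k (AS A (insert t S)))))"
      using IH1 IH2 AS' by simp
    also have "\<dots> = (\<Sum>S\<in>Pow {..<Suc t}. card (graph_derangements (LV k (AS A S)) (LE k (AS A S))))"
      unfolding pow by (rule sum_Pow_insert[symmetric]) auto
    finally show "card (graph_derangements (GV k m A (Suc t)) (GE k m A (Suc t))) = (\<Sum>S\<in>Pow {..<Suc t}. card (graph_derangements (LV k (AS A S)) (LE k (AS A S))))" .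
  qed
qed

end


definition A0 :: "nat \<Rightarrow> nat \<Rightarrow> nat set" where "A0 m = (\<lambda>i. {..<m})"

lemma sum_Pow_pow:
  fixes x :: real
  shows "(\<Sum>S\<in>Pow {..<t}. x ^ card S) = (1 + x) ^ t"
proof (induction t)
  case 0 thus ?case by simp
next
  case (Suc t)
  have "(\<Sum>S\<in>Pow {..<Suc t}. x ^ card S) = (\<Sum>S\<in>Pow (insert t {..<t}). x ^ card S)"
    by (simp add: lessThan_Suc)
  also have "\<dots> = (\<Sum>S\<in>Pow {..<t}. x ^ card S) + (\<Sum>S\<in>Pow {..<t}. x ^ card (insert t S))"
    by (rule sum_Pow_insert) auto
  also have "(\<Sum>S\<in>Pow {..<t}. x ^ card (insert t S)) = (\<Sum>S\<in>Pow {..<t}. x * x ^ card S)"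
  proof (rule sum.cong[OF refl])
    fix S assume "S \<in> Pow {..<t}"
    hence "t \<notin> S" "finite S" using finite_subset[of S "{..<t}"] by auto
    hence "card (insert t S) = Suc (card S)" by simp
    thus "x ^ card (insert t S) = x * x ^ card S" by simp
  qed
  also have "\<dots> = x * (\<Sum>S\<in>Pow {..<t}. x ^ card S)" by (simp add: sum_distrib_left)
  finally show ?case using Suc by (simp add: algebra_simps)
qed

lemma card_AS:
  assumes "0 < m"
  shows "card (AS (A0 m) S i) = (if i \<in> S then m - 1 else m)"
  using assms by (simp add: AS_def A0_def)

definition trm :: "nat \<Rightarrow> nat \<Rightarrow> nat set \<Rightarrow> nat \<Rightarrow> nat" where
  "trm k m S j = (\<Prod>i<k. (if i \<in> S then m - 1 else m) choose j) * fact j ^ k"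

lemma P_formula:
  assumes k2: "2 \<le> k" and m1: "1 \<le> m" and tk: "t \<le> k"
  shows "card (graph_perms (GV k m (A0 m) t) (GE k m (A0 m) t)) = (\<Sum>S\<in>Pow {..<t}. \<Sum>j\<le>m. trm k m S j)"
proof -
  have hA: "\<And>i. i < k \<Longrightarrow> A0 m i \<subseteq> {..<m}" "\<And>i. i < t \<Longrightarrow> 0 \<in> A0 m i"
    using m1 by (auto simp: A0_def)
  have "card (graph_perms (GV k m (A0 m) t) (GE k m (A0 m) t)) =
      (\<Sum>S\<in>Pow {..<t}. card (graph_perms (LV k (AS (A0 m) S)) (LE k (AS (A0 m) S))))"
    using G_sum[OF k2 m1 hA(1) tk hA(2)] by simp
  also have "\<dots> = (\<Sum>S\<in>Pow {..<t}. \<Sum>j\<le>m. trm k m S j)"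
  proof (rule sum.cong[OF refl])
    fix S assume S: "S \<in> Pow {..<t}"
    have fin: "\<And>i. i < k \<Longrightarrow> finite (AS (A0 m) S i)" by (simp add: AS_def A0_def)
    have "card (graph_perms (LV k (AS (A0 m) S)) (LE k (AS (A0 m) S)))
        = (\<Sum>j\<le>card (AS (A0 m) S 0). (\<Prod>i<k. card (AS (A0 m) S i) choose j) * fact j ^ k)"
      by (rule card_PP[OF k2 fin])
    also have "\<dots> = (\<Sum>j\<le>card (AS (A0 m) S 0). trm k m S j)"
      using m1 by (simp add: trm_def card_AS)
    also have "\<dots> = (\<Sum>j\<le>m. trm k m S j)"
    proof (cases "0 \<in> S")
      case False thus ?thesis using m1 by (simp add: card_AS)
    next
      case True
      have "m = Suc (m - 1)" using m1 by simp
      hence "(\<Sum>j\<le>m. trm k m S j) = (\<Sum>j\<le>m - 1. trm k m S j) + trm k m S m"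
        by (metis sum.atMost_Suc)
      moreover have "trm k m S m = 0"
      proof -
        have "0 \<in> {..<k}" using k2 by simp
        moreover have "(if 0 \<in> S then m - 1 else m) choose m = 0" using True m1 by simp
        ultimately have ex: "\<exists>a\<in>{..<k}. (if a \<in> S then m - 1 else m) choose m = 0" by blast
        have "(\<Prod>i<k. (if i \<in> S then m - 1 else m) choose m) = 0"
          by (rule prod_zero[OF _ ex]) simp
        thus ?thesis by (simp add: trm_def)
      qed
      ultimately show ?thesis using True m1 by (simp add: card_AS)
    qed
    finally show "card (graph_perms (LV k (AS (A0 m) S)) (LE k (AS (A0 m) S))) = (\<Sum>j\<le>m. trm k m S j)" .
  qed
  finally show ?thesis .
qed

lemma D_formula:
  assumes k2: "2 \<le> k" and m1: "1 \<le> m" and tk: "t < k"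
  shows "card (graph_derangements (GV k m (A0 m) t) (GE k m (A0 m) t)) = fact m ^ k"
proof -
  have hA: "\<And>i. i < k \<Longrightarrow> A0 m i \<subseteq> {..<m}" "\<And>i. i < t \<Longrightarrow> 0 \<in> A0 m i"
    using m1 by (auto simp: A0_def)
  have "card (graph_derangements (GV k m (A0 m) t) (GE k m (A0 m) t)) =
      (\<Sum>S\<in>Pow {..<t}. card (graph_derangements (LV k (AS (A0 m) S)) (LE k (AS (A0 m) S))))"
    using G_sum[OF k2 m1 hA(1) _ hA(2)] tk by simp
  also have "\<dots> = (\<Sum>S\<in>Pow {..<t}. if S = {} then fact m ^ k else 0)"
  proof (rule sum.cong[OF refl])
    fix S assume S: "S \<in> Pow {..<t}"
    have fin: "\<And>i. i < k \<Longrightarrow> finite (AS (A0 m) S i)" by (simp add: AS_def A0_def)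
    show "card (graph_derangements (LV k (AS (A0 m) S)) (LE k (AS (A0 m) S))) = (if S = {} then fact m ^ k else 0)"
    proof (cases "S = {}")
      case True
      have "\<And>i. i < k \<Longrightarrow> card (AS (A0 m) S i) = m" using True m1 by (simp add: card_AS)
      thus ?thesis using card_DD_eq[OF k2 fin] True by simp
    next
      case False
      then obtain s where s: "s \<in> S" by blast
      have st: "s < t" using s S by auto
      show ?thesis
      proof (cases "0 \<in> S")
        case True
        have "k - 1 \<notin> S" using S tk by auto
        moreover have "k - 1 < k" using k2 by simp
        ultimately have "card (AS (A0 m) S (k - 1)) \<noteq> card (AS (A0 m) S 0)"
          using True m1 by (simp add: card_AS)
        thus ?thesis using card_DD_zero[OF k2 fin \<open>k - 1 < k\<close>] False by simp
      next
        case f0: False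
        have "s < k" using st tk by simp
        moreover have "card (AS (A0 m) S s) \<noteq> card (AS (A0 m) S 0)" using s f0 m1 by (simp add: card_AS)
        ultimately show ?thesis using card_DD_zero[OF k2 fin] False by simp
      qed
    qed
  qed
  also have "\<dots> = fact m ^ k" by (simp add: sum.If_cases)
  finally show ?thesis .
qed



lemma trm_top:
  assumes "S \<subseteq> {..<k}" "1 \<le> m"
  shows "trm k m S m = (if S = {} then fact m ^ k else 0)"
proof (cases "S = {}")
  case True thus ?thesis by (simp add: trm_def)
next
  case False
  then obtain s where s: "s \<in> S" by blast
  hence "s \<in> {..<k}" using assms by auto
  moreover have "(if s \<in> S then m - 1 else m) choose m = 0" using s assms by simp
  ultimately have ex: "\<exists>a\<in>{..<k}. (if a \<in> S then m - 1 else m) choose m = 0" by blast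
  have "(\<Prod>i<k. (if i \<in> S then m - 1 else m) choose m) = 0" by (rule prod_zero[OF _ ex]) simp
  thus ?thesis using False by (simp add: trm_def)
qed

lemma choose_m1: "1 \<le> m \<Longrightarrow> m choose (m - 1) = m"
  by (metis binomial_symmetric choose_one diff_diff_cancel)

lemma choose_m1': "1 \<le> m \<Longrightarrow> m choose (m - Suc 0) = m"
  using choose_m1 by simp

lemma trm_sub:
  assumes S: "S \<subseteq> {..<k}" and m: "1 \<le> m"
  shows "trm k m S (m - 1) * m ^ card S = fact m ^ k"
proof -
  have "(\<Prod>i<k. (if i \<in> S then m - 1 else m) choose (m - 1)) = (\<Prod>i<k. if i \<in> S then 1 else m)"
    by (rule prod.cong[OF refl]) (simp add: choose_m1'[OF m])
  also have "\<dots> = (\<Prod>i\<in>{..<k} - S. m)"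
    by (rule prod.mono_neutral_cong_right) auto
  also have "\<dots> = m ^ card ({..<k} - S)" by simp
  also have "card ({..<k} - S) = k - card S"
    using card_Diff_subset[OF finite_subset[OF S] S] by simp
  finally have p: "(\<Prod>i<k. (if i \<in> S then m - 1 else m) choose (m - 1)) = m ^ (k - card S)" .
  have cS: "card S \<le> k" using card_mono[OF _ S] by simp
  have pw: "m ^ (k - card S) * m ^ card S = m ^ k"
    by (metis cS le_add_diff_inverse2 power_add)
  obtain n where n: "m = Suc n" using m by (metis Suc_le_D One_nat_def)
  have fm: "m * fact (m - 1) = fact m" using n by simp
  have "trm k m S (m - 1) * m ^ card S = (m ^ (k - card S) * m ^ card S) * fact (m - 1) ^ k"
    using p by (simp add: trm_def mult_ac)
  also have "\<dots> = (m * fact (m - 1)) ^ k" using pw by (simp add: power_mult_distrib)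
  also have "\<dots> = fact m ^ k" using fm by simp
  finally show ?thesis .
qed

lemma trm_low:
  assumes j: "j + 2 \<le> m"
  shows "trm k m S j * 2 ^ k \<le> fact m ^ k"
proof -
  have "(\<Prod>i<k. (if i \<in> S then m - 1 else m) choose j) \<le> (\<Prod>i<k. m choose j)"
    by (rule prod_mono) (auto intro: binomial_right_mono)
  hence "trm k m S j \<le> (m choose j) ^ k * fact j ^ k" by (simp add: trm_def)
  hence "trm k m S j * 2 ^ k \<le> (m choose j) ^ k * fact j ^ k * 2 ^ k" by simp
  also have "\<dots> = (2 * (m choose j) * fact j) ^ k" by (simp add: power_mult_distrib)
  also have "\<dots> \<le> fact m ^ k"
  proof (rule power_mono)
    have "fact j * fact (m - j) * (m choose j) = fact m" using j by (intro binomial_fact_lemma) simp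
    moreover have "(2::nat) \<le> fact (m - j)"
    proof -
      have "fact 2 \<le> (fact (m - j) :: nat)" using j by (intro fact_mono_nat) simp
      thus ?thesis by (simp add: numeral_2_eq_2)
    qed
    ultimately show "2 * (m choose j) * fact j \<le> fact m"
      by (metis mult.commute mult.left_commute mult_le_mono1)
  qed simp
  finally show ?thesis .
qed

lemma P_bounds:
  assumes k2: "2 \<le> k" and m2: "2 \<le> m" and tk: "t < k"
  defines "P \<equiv> real (card (graph_perms (GV k m (A0 m) t) (GE k m (A0 m) t)))"
  defines "X \<equiv> real (fact m ^ k)"
  shows "X * (1 + (1 + 1 / real m) ^ t) \<le> P"
    "P \<le> X * (1 + (1 + 1 / real m) ^ t) + 2 ^ t * (real m - 1) * X / 2 ^ k"
proof -
  obtain n where n: "m = Suc (Suc n)" using m2 by (metis add_2_eq_Suc le_Suc_ex)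
  have PS: "P = (\<Sum>S\<in>Pow {..<t}. \<Sum>j\<le>m. real (trm k m S j))"
    unfolding P_def using P_formula[OF k2 _ less_imp_le[OF tk]] m2 by simp
  have split: "(\<Sum>j\<le>m. real (trm k m S j)) = (\<Sum>j\<le>n. real (trm k m S j)) + real (trm k m S (m - 1)) + real (trm k m S m)" for S
    using n by simp
  let ?L = "\<Sum>S\<in>Pow {..<t}. \<Sum>j\<le>n. real (trm k m S j)"
  have top: "(\<Sum>S\<in>Pow {..<t}. real (trm k m S m)) = X"
  proof -
    have "(\<Sum>S\<in>Pow {..<t}. real (trm k m S m)) = (\<Sum>S\<in>Pow {..<t}. if S = {} then X else 0)"
    proof (rule sum.cong[OF refl])
      fix S assume "S \<in> Pow {..<t}"
      hence "S \<subseteq> {..<k}" using tk by auto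
      thus "real (trm k m S m) = (if S = {} then X else 0)" using trm_top[of S k m] m2 by (simp add: X_def)
    qed
    also have "\<dots> = X" by (simp add: sum.If_cases)
    finally show ?thesis .
  qed
  have mid: "(\<Sum>S\<in>Pow {..<t}. real (trm k m S (m - 1))) = X * (1 + 1 / real m) ^ t"
  proof -
    have "(\<Sum>S\<in>Pow {..<t}. real (trm k m S (m - 1))) = (\<Sum>S\<in>Pow {..<t}. X * (1 / real m) ^ card S)"
    proof (rule sum.cong[OF refl])
      fix S assume "S \<in> Pow {..<t}"
      hence "S \<subseteq> {..<k}" using tk by auto
      hence "real (trm k m S (m - 1)) * real m ^ card S = X"
        using trm_sub[of S k m] m2 unfolding X_def by (metis of_nat_mult of_nat_power one_le_numeral order.trans)
      moreover have "real m ^ card S > 0" using m2 by simp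
      ultimately show "real (trm k m S (m - 1)) = X * (1 / real m) ^ card S"
        by (simp add: field_simps power_one_over)
    qed
    also have "\<dots> = X * (1 + 1 / real m) ^ t" by (simp add: sum_distrib_left[symmetric] sum_Pow_pow)
    finally show ?thesis .
  qed
  have Peq: "P = ?L + X * (1 + 1 / real m) ^ t + X"
    unfolding PS split sum.distrib mid top by simp
  have L0: "0 \<le> ?L" by (intro sum_nonneg) simp
  have L1: "?L \<le> 2 ^ t * (real m - 1) * X / 2 ^ k"
  proof -
    have "?L \<le> (\<Sum>S\<in>Pow {..<t}. \<Sum>j\<le>n. X / 2 ^ k)"
    proof (intro sum_mono)
      fix S j assume j: "j \<in> {..n}"
      have "trm k m S j * 2 ^ k \<le> fact m ^ k" using j n by (intro trm_low) simp
      hence "real (trm k m S j) * 2 ^ k \<le> X" unfolding X_def by (metis of_nat_le_iff of_nat_mult of_nat_numeral of_nat_power)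
      thus "real (trm k m S j) \<le> X / 2 ^ k" by (simp add: field_simps)
    qed
    also have "\<dots> = 2 ^ t * (real m - 1) * X / 2 ^ k" using n by (simp add: card_Pow)
    finally show ?thesis .
  qed
  show "X * (1 + (1 + 1 / real m) ^ t) \<le> P" using Peq L0 by (simp add: algebra_simps)
  show "P \<le> X * (1 + (1 + 1 / real m) ^ t) + 2 ^ t * (real m - 1) * X / 2 ^ k"
    using Peq L1 by (simp add: algebra_simps)
qed



lemma ratio_close:
  fixes X P a B w :: real
  assumes X: "0 < X" and a: "0 \<le> a" and w: "0 \<le> w" and B: "0 \<le> B"
    and lo: "X * (1 + a) \<le> P" and hi: "P \<le> X * (1 + a) + B * X"
  shows "\<bar>X / P - 1 / (1 + w)\<bar> \<le> \<bar>a - w\<bar> + B"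
proof -
  define q where "q = P / X"
  have q1: "1 + a \<le> q" using lo X by (simp add: q_def field_simps)
  have q2: "q \<le> 1 + a + B" using hi X by (simp add: q_def field_simps)
  have qpos: "1 \<le> q" using q1 a by simp
  have XP: "X / P = 1 / q" using X qpos by (simp add: q_def)
  have qw: "1 \<le> q * (1 + w)"
  proof -
    have "1 * 1 \<le> q * (1 + w)" by (rule mult_mono) (use qpos w in auto)
    thus ?thesis by simp
  qed
  have "1 / q - 1 / (1 + w) = (1 + w - q) / (q * (1 + w))"
    using qpos w by (simp add: field_simps)
  hence "\<bar>1 / q - 1 / (1 + w)\<bar> = \<bar>1 + w - q\<bar> / (q * (1 + w))"
    using qw by (simp add: abs_divide)
  also have "\<dots> \<le> \<bar>1 + w - q\<bar> / 1"
    by (rule divide_left_mono) (use qw in auto)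
  also have "\<dots> = \<bar>1 + w - q\<bar>" by simp
  also have "\<dots> \<le> \<bar>a - w\<bar> + B"
  proof -
    have "a - w \<le> \<bar>a - w\<bar>" "w - a \<le> \<bar>a - w\<bar>" by auto
    thus ?thesis using q1 q2 B by (simp add: abs_le_iff)
  qed
  finally show ?thesis using XP by simp
qed

lemma approx_params:
  fixes \<rho> \<delta> :: real
  assumes "0 < \<rho>" "\<rho> \<le> 1/2" "0 < \<delta>"
  shows "\<exists>k m t. 2 \<le> k \<and> 2 \<le> m \<and> t < k \<and>
     \<bar>(1 + 1 / real m) ^ t - (1 / \<rho> - 1)\<bar> + 2 ^ t * (real m - 1) / 2 ^ k < \<delta>"
proof -
  define w where "w = 1 / \<rho> - 1"
  have w1: "1 \<le> w" using assms by (simp add: w_def field_simps)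
  define m where "m = nat \<lceil>2 * w / \<delta>\<rceil> + 2"
  have m2: "2 \<le> m" by (simp add: m_def)
  have "2 * w / \<delta> \<le> real (nat \<lceil>2 * w / \<delta>\<rceil>)" by linarith
  hence mbig: "2 * w / \<delta> < real m" by (simp add: m_def)
  have wm: "w / real m < \<delta> / 2"
  proof -
    have "2 * w < \<delta> * real m" using mbig assms(3) by (simp add: field_simps)
    thus ?thesis using m2 assms(3) by (simp add: field_simps)
  qed
  define c where "c = 1 + 1 / real m"
  have c1: "1 < c" using m2 by (simp add: c_def)
  obtain t1 where "w < c ^ t1" using real_arch_pow[OF c1] by blast
  hence ex: "\<exists>t. w \<le> c ^ t" by (auto intro: less_imp_le)
  define t where "t = (LEAST t. w \<le> c ^ t)"
  have wt: "w \<le> c ^ t" unfolding t_def by (rule LeastI_ex[OF ex])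
  have up: "c ^ t - w \<le> w / real m"
  proof (cases t)
    case 0 thus ?thesis using w1 wt m2 by simp
  next
    case (Suc s)
    have "\<not> w \<le> c ^ s" using not_less_Least[of s "\<lambda>t. w \<le> c ^ t"] Suc unfolding t_def by simp
    hence "c ^ s < w" by simp
    hence "c * c ^ s \<le> c * w" using c1 by simp
    thus ?thesis using Suc by (simp add: c_def field_simps)
  qed
  have d1: "\<bar>c ^ t - w\<bar> < \<delta> / 2"
  proof -
    have "0 \<le> c ^ t - w" using wt by simp
    thus ?thesis using up wm abs_of_nonneg[of "c ^ t - w"] by linarith
  qed
  obtain N :: nat where N: "2 * (real m - 1) / \<delta> < real N" using reals_Archimedean2 by blast
  have Npos: "0 < N"
  proof -
    have "0 < 2 * (real m - 1) / \<delta>" using m2 assms(3) by simp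
    thus ?thesis using N by simp
  qed
  define k where "k = t + N + 2"
  have "real N < 2 ^ (N + 2)"
  proof -
    have "N < 2 ^ N" by (rule less_exp)
    also have "(2::nat) ^ N \<le> 2 ^ (N + 2)" by (rule power_increasing) simp_all
    finally have "N < (2::nat) ^ (N + 2)" .
    thus ?thesis by (metis of_nat_less_iff of_nat_numeral of_nat_power)
  qed
  have B: "2 ^ t * (real m - 1) / 2 ^ k < \<delta> / 2"
  proof -
    have "2 ^ t * (real m - 1) / 2 ^ k = (real m - 1) / 2 ^ (N + 2)"
      by (simp add: k_def power_add field_simps)
    also have "\<dots> < (real m - 1) / real N"
      using \<open>real N < 2 ^ (N + 2)\<close> Npos m2 by (intro divide_strict_left_mono) simp_all
    also have "\<dots> < \<delta> / 2" using N Npos assms(3) by (simp add: field_simps)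
    finally show ?thesis .
  qed
  have fin: "\<bar>(1 + 1 / real m) ^ t - (1 / \<rho> - 1)\<bar> + 2 ^ t * (real m - 1) / 2 ^ k < \<delta>"
    using d1 B unfolding c_def w_def by linarith
  have "2 \<le> k" "t < k" by (simp_all add: k_def)
  thus ?thesis using fin m2 by blast
qed



theorem mainTheorem1:
  fixes r \<epsilon> :: real
  assumes "0 \<le> r" and "r \<le> 1/2" and "\<epsilon> > 0"
  shows "\<exists>(V :: nat set) E. digraph V E \<and> V \<noteq> {} \<and> \<bar>dp_ratio V E - r\<bar> < \<epsilon>"
proof -
  define \<rho> where "\<rho> = max r (min (\<epsilon>/2) (1/2))"
  have r0: "0 < \<rho>" "\<rho> \<le> 1/2" using assms by (auto simp: \<rho>_def max_def min_def)
  have r1: "\<bar>\<rho> - r\<bar> \<le> \<epsilon>/2"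
  proof (cases "min (\<epsilon>/2) (1/2) \<le> r")
    case True thus ?thesis using assms by (simp add: \<rho>_def max_def)
  next
    case False
    hence "r \<le> min (\<epsilon>/2) (1/2)" by linarith
    hence "\<rho> = min (\<epsilon>/2) (1/2)" unfolding \<rho>_def by (rule max_absorb2)
    moreover have "min (\<epsilon>/2) (1/2) \<le> \<epsilon>/2" by simp
    ultimately show ?thesis using False assms(1) by linarith
  qed
  have e2: "0 < \<epsilon>/2" using assms by simp
  obtain k m t where km: "2 \<le> k" "2 \<le> m" "t < k"
    and cl: "\<bar>(1 + 1 / real m) ^ t - (1 / \<rho> - 1)\<bar> + 2 ^ t * (real m - 1) / 2 ^ k < \<epsilon>/2"
    using approx_params[OF r0 e2] by blast
  have m1: "1 \<le> m" using km by simp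
  let ?V = "GV k m (A0 m) t" and ?E = "GE k m (A0 m) t"
  have hA: "\<And>i. i < k \<Longrightarrow> A0 m i \<subseteq> {..<m}" "\<And>i. i < t \<Longrightarrow> 0 \<in> A0 m i"
    using m1 by (auto simp: A0_def)
  have tk: "t \<le> k" using km(3) by simp
  have dg: "digraph ?V ?E" using G_digraph_fresh[OF km(1) m1 hA(1) tk hA(2)] .
  have "0 \<in> LV k (A0 m)" using m1 by (simp add: LV_def A0_def)
  hence ne: "?V \<noteq> {}" using GV_eq[OF km(1) m1, of "A0 m" t] by auto
  define X where "X = real (fact m ^ k)"
  define P where "P = real (card (graph_perms ?V ?E))"
  have Xpos: "0 < X" by (simp add: X_def)
  have D: "real (card (graph_derangements ?V ?E)) = X"
    using D_formula[OF km(1) m1 km(3)] by (simp add: X_def)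
  have lo: "X * (1 + (1 + 1 / real m) ^ t) \<le> P" using P_bounds(1)[OF km] by (simp add: X_def P_def)
  have hi: "P \<le> X * (1 + (1 + 1 / real m) ^ t) + (2 ^ t * (real m - 1) / 2 ^ k) * X"
    using P_bounds(2)[OF km] by (simp add: X_def P_def)
  have w0: "0 \<le> 1 / \<rho> - 1" using r0 by (simp add: field_simps)
  have B0: "0 \<le> 2 ^ t * (real m - 1) / 2 ^ k" using m1 by simp
  have c1: "\<bar>X / P - 1 / (1 + (1 / \<rho> - 1))\<bar> \<le> \<bar>(1 + 1 / real m) ^ t - (1 / \<rho> - 1)\<bar> + 2 ^ t * (real m - 1) / 2 ^ k"
    by (rule ratio_close[OF Xpos _ w0 B0 lo hi]) simp
  have "1 / (1 + (1 / \<rho> - 1)) = \<rho>" using r0 by simp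
  hence c2: "\<bar>X / P - \<rho>\<bar> < \<epsilon>/2" using c1 cl by linarith
  have "dp_ratio ?V ?E = X / P" using D by (simp add: dp_ratio_def P_def)
  hence "\<bar>dp_ratio ?V ?E - \<rho>\<bar> < \<epsilon>/2" using c2 by simp
  hence "\<bar>dp_ratio ?V ?E - r\<bar> < \<epsilon>" using r1 by linarith
  thus ?thesis using dg ne by blast
qed


end
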